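(* Let $n=|I|\ge 1$ and let $b,\kappa,\kappa_f,\kappa_s$ be positive integers with $\kappa_f<\kappa$, $\kappa_s=\kappa-\kappa_f$, and $\kappa_s\le b$. Let $k^*\in(\mathbb{B}^{n})^{\kappa}$ and $k^{**}\in(\mathbb{B}^{n})^{\kappa_f}$ with $k^{**}\neq (k^*_{\kappa_s+1},\dots,k^*_{\kappa})$. Define $$E^S(i,k)=\mathbb{1}\big[(k\neq k^* )\wedge (k_{1\leftrightarrow\kappa_s}=i_{1\leftrightarrow\kappa_s})\big],$$ $$P=\{(i,k): (k_{\kappa_s+1\leftrightarrow\kappa}\neq k^{**})\wedge(k\neq k^* )\}.$$ Let $f_b:(\mathbb{B}^n)^b\to\mathbb{B}^{m}$ and $f'_b:(\mathbb{B}^n)^b\times(\mathbb{B}^n)^\kappa\to\mathbb{B}^{m}$ be functions such that, for all $(i,k)$, $f'_b(i,k)\neq f_b(i)$ if and only if $E^S(i,k)=1$ or $(i,k)\in P$. Then every set $D\subseteq(\mathbb{B}^n)^b$ of input sequences with the property that for every key $k\neq k^*$ there exists $i\in D$ with $f'_b(i,k)\neq f_b(i)$ satisfies $|D|\ge 2^{\kappa_s n}$. In particular, any input sequence $i$ detects (i.e. satisfies $f'_b(i,k)\ne f_b(i)$ for) at most one key $k$ with suffix $k_{\kappa_s+1\leftrightarrow\kappa}=k^{**}$.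
   Context: $\mathbb{B}=\{0,1\}$. An input sequence is $i=(i_1,\dots,i_b)$ with each $i_j\in\mathbb{B}^n$ (the input applied in clock cycle $j$ of the $b$-unrolled encrypted circuit), and a key sequence is $k=(k_1,\dots,k_\kappa)$ with each $k_j\in\mathbb{B}^n$. For a sequence $s$, $s_{p\leftrightarrow q}$ denotes the subsequence $(s_p,\dots,s_q)$. $f_b$ is the function of the $b$-unrolled original circuit and $f'_b$ that of the $b$-unrolled encrypted circuit (after the $\kappa$ key cycles); $k^*$ is the correct key. An input sequence $i$ with $f'_b(i,k)\neq f_b(i)$ is said to detect (rule out) the wrong key $k$; the set $D$ models the set of distinguishing input patterns (DIPs) used by the SAT attack, so the conclusion states that the SAT attack needs at least $2^{\kappa_s n}$ DIPs. *)

theory Defs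
  imports Main
begin

text \<open>Bit vectors in B^n are boolean lists of length n; a sequence in (B^n)^l is a
list of length l of such vectors. The subsequence s_{p..q} (1-based) is
take/drop on lists.\<close>

definition bvecs :: "nat \<Rightarrow> bool list set" where
  "bvecs n = {v. length v = n}"

definition seqs :: "nat \<Rightarrow> nat \<Rightarrow> bool list list set" where
  "seqs n l = {s. length s = l \<and> (\<forall>x\<in>set s. length x = n)}"

definition ES :: "bool list list \<Rightarrow> nat \<Rightarrow> bool list list \<Rightarrow> bool list list \<Rightarrow> bool" where
  "ES kstar ks i k \<longleftrightarrow> k \<noteq> kstar \<and> take ks k = take ks i"

definition Pset :: "bool list list \<Rightarrow> bool list list \<Rightarrow> nat \<Rightarrow> (bool list list \<times> bool list list) set" where
  "Pset kstar kss ks = {(i, k). drop ks k \<noteq> kss \<and> k \<noteq> kstar}"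

end

theory Submission
  imports Defs
begin

theorem theorem1:
  fixes n m b \<kappa> \<kappa>f \<kappa>s :: nat
    and kstar kss :: "bool list list"
    and f :: "bool list list \<Rightarrow> bool list"
    and f' :: "bool list list \<Rightarrow> bool list list \<Rightarrow> bool list"
  assumes n_pos: "n \<ge> 1"
    and pos: "b > 0" "\<kappa> > 0" "\<kappa>f > 0" "\<kappa>s > 0"
    and kf_lt: "\<kappa>f < \<kappa>"
    and ks_def: "\<kappa>s = \<kappa> - \<kappa>f"
    and ks_le: "\<kappa>s \<le> b"
    and kstar: "kstar \<in> seqs n \<kappa>"
    and kss: "kss \<in> seqs n \<kappa>f"
    and kss_ne: "kss \<noteq> drop \<kappa>s kstar"
    and f_range: "\<forall>i\<in>seqs n b. f i \<in> bvecs m"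
    and f'_range: "\<forall>i\<in>seqs n b. \<forall>k\<in>seqs n \<kappa>. f' i k \<in> bvecs m"
    and char: "\<forall>i\<in>seqs n b. \<forall>k\<in>seqs n \<kappa>.
                 (f' i k \<noteq> f i \<longleftrightarrow> (ES kstar \<kappa>s i k \<or> (i, k) \<in> Pset kstar kss \<kappa>s))"
  shows "(\<forall>D. D \<subseteq> seqs n b \<longrightarrow>
            (\<forall>k\<in>seqs n \<kappa>. k \<noteq> kstar \<longrightarrow> (\<exists>i\<in>D. f' i k \<noteq> f i)) \<longrightarrow>
            card D \<ge> 2 ^ (\<kappa>s * n))
       \<and> (\<forall>i\<in>seqs n b. card {k \<in> seqs n \<kappa>. drop \<kappa>s k = kss \<and> f' i k \<noteq> f i} \<le> 1)"
proof -
  have seqs_eq: "seqs n l = {s. set s \<subseteq> {xs. set xs \<subseteq> (UNIV::bool set) \<and> length xs = n} \<and> length s = l}" for l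
    by (auto simp: seqs_def)
  have finB: "finite {xs. set xs \<subseteq> (UNIV::bool set) \<and> length xs = n}"
    by (rule finite_lists_length_eq) simp
  have cardB: "card {xs. set xs \<subseteq> (UNIV::bool set) \<and> length xs = n} = 2 ^ n"
    using card_lists_length_eq[of "UNIV::bool set" n] by simp
  have finS: "finite (seqs n l)" for l
    unfolding seqs_eq using finB by (rule finite_lists_length_eq)
  have cardS: "card (seqs n l) = 2 ^ (l * n)" for l
    unfolding seqs_eq using finB cardB by (simp add: card_lists_length_eq flip: power_mult)
  have lk: "length kstar = \<kappa>" "length kss = \<kappa>f" using kstar kss by (auto simp: seqs_def)
  have part1: "card D \<ge> 2 ^ (\<kappa>s * n)" if D: "D \<subseteq> seqs n b"
    and cov: "\<forall>k\<in>seqs n \<kappa>. k \<noteq> kstar \<longrightarrow> (\<exists>i\<in>D. f' i k \<noteq> f i)" for D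
  proof -
    have "seqs n \<kappa>s \<subseteq> take \<kappa>s ` D"
    proof
      fix p assume p: "p \<in> seqs n \<kappa>s"
      define k where "k = p @ kss"
      have lp: "length p = \<kappa>s" using p by (simp add: seqs_def)
      have kin: "k \<in> seqs n \<kappa>" using p kss kf_lt ks_def by (auto simp: seqs_def k_def)
      have dk: "drop \<kappa>s k = kss" "take \<kappa>s k = p" using lp by (auto simp: k_def)
      have "k \<noteq> kstar" using dk kss_ne by auto
      then obtain i where i: "i \<in> D" "f' i k \<noteq> f i" using cov kin by blast
      have "i \<in> seqs n b" using i D by auto
      then have "ES kstar \<kappa>s i k \<or> (i, k) \<in> Pset kstar kss \<kappa>s" using char kin i by blast
      then have "take \<kappa>s k = take \<kappa>s i" using dk by (auto simp: ES_def Pset_def)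
      then show "p \<in> take \<kappa>s ` D" using dk i by auto
    qed
    moreover have "finite D" using D finS finite_subset by blast
    ultimately have "card (seqs n \<kappa>s) \<le> card D"
      using card_mono[OF finite_imageI[OF \<open>finite D\<close>]] card_image_le[OF \<open>finite D\<close>, of "take \<kappa>s"]
      by (meson order_trans)
    then show ?thesis using cardS by simp
  qed
  have part2: "card {k \<in> seqs n \<kappa>. drop \<kappa>s k = kss \<and> f' i k \<noteq> f i} \<le> 1" if i: "i \<in> seqs n b" for i
  proof -
    have "{k \<in> seqs n \<kappa>. drop \<kappa>s k = kss \<and> f' i k \<noteq> f i} \<subseteq> {take \<kappa>s i @ kss}"
    proof
      fix k assume k: "k \<in> {k \<in> seqs n \<kappa>. drop \<kappa>s k = kss \<and> f' i k \<noteq> f i}"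
      then have "ES kstar \<kappa>s i k \<or> (i, k) \<in> Pset kstar kss \<kappa>s" using char i by blast
      then have "take \<kappa>s k = take \<kappa>s i" using k by (auto simp: ES_def Pset_def)
      then have "k = take \<kappa>s i @ kss" using k append_take_drop_id[of \<kappa>s k] by simp
      then show "k \<in> {take \<kappa>s i @ kss}" by simp
    qed
    then have "card {k \<in> seqs n \<kappa>. drop \<kappa>s k = kss \<and> f' i k \<noteq> f i} \<le> card {take \<kappa>s i @ kss}"
      by (rule card_mono[rotated]) simp
    then show ?thesis by simp
  qed
  show ?thesis using part1 part2 by blast
qed

end
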